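(* Let $f\in\mathfrak{D}_j$ be homogeneous of degree $j$, let $j-2\ge k_1\ge\cdots\ge k_s\ge 1$ be integers, $h_t\in\mathfrak{D}_{k_t}$ homogeneous for $1\le t\le s$, and $F=f+\sum_{t=1}^s h_tZ_t\in\mathfrak{E}$. For each $t$, define $$B_t=\frac{R\circ\langle f,h_1,\ldots,h_t\rangle+(\operatorname{Ann}_R\langle f,h_1,\ldots,h_{t-1}\rangle)\circ(h_tZ_t+\cdots+h_sZ_s)}{R\circ\langle f,h_1,\ldots,h_{t-1}\rangle+(\operatorname{Ann}_R\langle f,h_1,\ldots,h_t\rangle)\circ(h_{t+1}Z_{t+1}+\cdots+h_sZ_s)}.$$ Then $B_t=0$ if and only if $h_t\in R\circ\langle f,h_1,\ldots,h_{t-1}\rangle$.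
   Context: Let $\mathsf{k}$ be a field, $R=\mathsf{k}\{x_1,\ldots,x_r\}$, $\mathfrak{D}=\mathsf{k}_{DP}[X_1,\ldots,X_r]\subset\mathfrak{E}=\mathsf{k}_{DP}[X_1,\ldots,X_r,Z_1,\ldots,Z_s]$ divided power algebras, with $R$ acting by contraction ($x^{\alpha}\circ X^{[\beta]}=X^{[\beta-\alpha]}$ if $\beta\ge\alpha$ componentwise, $0$ otherwise; the $Z_i$ are untouched by $R$). $R\circ\langle g_1,\ldots\rangle$ is the span of all partials $\varphi\circ g_i$, $\operatorname{Ann}_R\langle g_1,\ldots\rangle$ is the set of elements of $R$ annihilating every $g_i$, and $V\circ g=\{v\circ g:v\in V\}$; sums in $B_t$ are sums of subspaces of $\mathfrak{E}$. *)

theory Defs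
  imports Complex_Main "HOL-Library.Poly_Mapping" "HOL-Library.Function_Algebras"
begin

datatype var = X nat | Z nat

type_synonym mono = "var \<Rightarrow>\<^sub>0 nat"

text \<open>An element of a divided power algebra (or a power series) is given by its
coefficient function on exponent vectors: F gamma is the coefficient of the divided
power monomial X^[gamma] (resp. of the ordinary monomial x^gamma for series).\<close>

definition Xvars :: "nat \<Rightarrow> var set" where
  "Xvars r = {X i | i. 1 \<le> i \<and> i \<le> r}"

definition Zvars :: "nat \<Rightarrow> var set" where
  "Zvars s = {Z i | i. 1 \<le> i \<and> i \<le> s}"

definition mdeg :: "mono \<Rightarrow> nat" where
  "mdeg \<gamma> = (\<Sum>v\<in>Poly_Mapping.keys \<gamma>. Poly_Mapping.lookup \<gamma> v)"

definition DPE :: "nat \<Rightarrow> nat \<Rightarrow> (mono \<Rightarrow> 'k::field) set" where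
  "DPE r s = {F. finite {\<gamma>. F \<gamma> \<noteq> 0} \<and>
                 (\<forall>\<gamma>. F \<gamma> \<noteq> 0 \<longrightarrow> Poly_Mapping.keys \<gamma> \<subseteq> Xvars r \<union> Zvars s)}"

definition DPD :: "nat \<Rightarrow> (mono \<Rightarrow> 'k::field) set" where
  "DPD r = DPE r 0"

definition DPDj :: "nat \<Rightarrow> nat \<Rightarrow> (mono \<Rightarrow> 'k::field) set" where
  "DPDj r j = {F \<in> DPD r. \<forall>\<gamma>. F \<gamma> \<noteq> 0 \<longrightarrow> mdeg \<gamma> = j}"

definition Rser :: "nat \<Rightarrow> (mono \<Rightarrow> 'k::field) set" where
  "Rser r = {\<phi>. \<forall>\<alpha>. \<phi> \<alpha> \<noteq> 0 \<longrightarrow> Poly_Mapping.keys \<alpha> \<subseteq> Xvars r}"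

text \<open>Contraction action: x^alpha o X^[beta] = X^[beta - alpha] if beta \<ge> alpha, else 0,
extended linearly; (phi o F)(gamma) = sum_alpha phi(alpha) F(gamma + alpha)
(a finite sum since F has finite support).\<close>
definition contract :: "(mono \<Rightarrow> 'k::field) \<Rightarrow> (mono \<Rightarrow> 'k) \<Rightarrow> (mono \<Rightarrow> 'k)" where
  "contract \<phi> F = (\<lambda>\<gamma>. \<Sum>\<alpha>\<in>{\<alpha>. F (\<gamma> + \<alpha>) \<noteq> 0}. \<phi> \<alpha> * F (\<gamma> + \<alpha>))"

definition kscale :: "'k::field \<Rightarrow> (mono \<Rightarrow> 'k) \<Rightarrow> (mono \<Rightarrow> 'k)" where
  "kscale c F = (\<lambda>\<gamma>. c * F \<gamma>)"

definition kspan :: "(mono \<Rightarrow> 'k::field) set \<Rightarrow> (mono \<Rightarrow> 'k) set" where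
  "kspan S = module.span kscale S"

definition RC :: "nat \<Rightarrow> (mono \<Rightarrow> 'k::field) set \<Rightarrow> (mono \<Rightarrow> 'k) set" where
  "RC r G = kspan {contract \<phi> g | \<phi> g. \<phi> \<in> Rser r \<and> g \<in> G}"

definition AnnR :: "nat \<Rightarrow> (mono \<Rightarrow> 'k::field) set \<Rightarrow> (mono \<Rightarrow> 'k) set" where
  "AnnR r G = {\<phi> \<in> Rser r. \<forall>g\<in>G. contract \<phi> g = 0}"

definition act_set :: "(mono \<Rightarrow> 'k::field) set \<Rightarrow> (mono \<Rightarrow> 'k) \<Rightarrow> (mono \<Rightarrow> 'k) set" where
  "act_set V g = {contract v g | v. v \<in> V}"

definition ssum :: "(mono \<Rightarrow> 'k::field) set \<Rightarrow> (mono \<Rightarrow> 'k) set \<Rightarrow> (mono \<Rightarrow> 'k) set" where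
  "ssum A B = {a + b | a b. a \<in> A \<and> b \<in> B}"

text \<open>Divided power multiplication by Z_u = Z_u^[1]:
X^[beta] Z^[a] * Z_u^[1] = (a_u + 1) X^[beta] Z^[a + e_u].\<close>
definition mulZ :: "(mono \<Rightarrow> 'k::field) \<Rightarrow> nat \<Rightarrow> (mono \<Rightarrow> 'k)" where
  "mulZ g u = (\<lambda>\<gamma>. if 1 \<le> Poly_Mapping.lookup \<gamma> (Z u)
                    then of_nat (Poly_Mapping.lookup \<gamma> (Z u)) * g (\<gamma> - Poly_Mapping.single (Z u) 1)
                    else 0)"

text \<open>The quotient N / M of subspaces of E is zero, i.e. N maps to zero in E / M.\<close>
definition quot_zero :: "(mono \<Rightarrow> 'k::field) set \<Rightarrow> (mono \<Rightarrow> 'k) set \<Rightarrow> bool" where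
  "quot_zero N M \<longleftrightarrow> N \<subseteq> M"

definition Bnum :: "nat \<Rightarrow> nat \<Rightarrow> (mono \<Rightarrow> 'k::field) \<Rightarrow> (nat \<Rightarrow> mono \<Rightarrow> 'k) \<Rightarrow> nat \<Rightarrow> (mono \<Rightarrow> 'k) set" where
  "Bnum r s f h t =
     ssum (RC r (insert f (h ` {1..t})))
          (act_set (AnnR r (insert f (h ` {1..t-1}))) (\<lambda>\<gamma>. \<Sum>u\<in>{t..s}. mulZ (h u) u \<gamma>))"

definition Bden :: "nat \<Rightarrow> nat \<Rightarrow> (mono \<Rightarrow> 'k::field) \<Rightarrow> (nat \<Rightarrow> mono \<Rightarrow> 'k) \<Rightarrow> nat \<Rightarrow> (mono \<Rightarrow> 'k) set" where
  "Bden r s f h t =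
     ssum (RC r (insert f (h ` {1..t-1})))
          (act_set (AnnR r (insert f (h ` {1..t}))) (\<lambda>\<gamma>. \<Sum>u\<in>{t+1..s}. mulZ (h u) u \<gamma>))"

end

theory Submission imports Defs "HOL-Library.FuncSet" begin

interpretation ks: module "kscale :: 'k::field \<Rightarrow> _"
  by unfold_locales (auto simp: kscale_def fun_eq_iff algebra_simps)

lemma kspan_eq: "kspan = ks.span"
  by (simp add: kspan_def fun_eq_iff)

lemma div_fin: "finite {\<delta>::mono. \<exists>\<gamma>. \<gamma> + \<delta> = \<gamma>0}"
proof -
  let ?K = "Poly_Mapping.keys \<gamma>0"
  let ?A = "{\<delta>::mono. \<exists>\<gamma>. \<gamma> + \<delta> = \<gamma>0}"
  have inj: "inj_on (\<lambda>\<delta>. restrict (Poly_Mapping.lookup \<delta>) ?K) ?A"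
  proof (rule inj_onI)
    fix a b assume a: "a \<in> ?A" and b: "b \<in> ?A"
      and eq: "restrict (Poly_Mapping.lookup a) ?K = restrict (Poly_Mapping.lookup b) ?K"
    show "a = b"
    proof (rule poly_mapping_eqI)
      fix v show "Poly_Mapping.lookup a v = Poly_Mapping.lookup b v"
      proof (cases "v \<in> ?K")
        case True then show ?thesis using eq by (metis restrict_apply')
      next
        case False
        then have z: "Poly_Mapping.lookup \<gamma>0 v = 0" by (simp add: in_keys_iff)
        from a obtain g where g: "g + a = \<gamma>0" by auto
        from b obtain g' where g': "g' + b = \<gamma>0" by auto
        have "Poly_Mapping.lookup g v + Poly_Mapping.lookup a v = 0"
          using g z by (metis lookup_add)
        moreover have "Poly_Mapping.lookup g' v + Poly_Mapping.lookup b v = 0"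
          using g' z by (metis lookup_add)
        ultimately show ?thesis by simp
      qed
    qed
  qed
  have sub: "(\<lambda>\<delta>. restrict (Poly_Mapping.lookup \<delta>) ?K) ` ?A \<subseteq> PiE ?K (\<lambda>v. {0..Poly_Mapping.lookup \<gamma>0 v})"
  proof
    fix x assume "x \<in> (\<lambda>\<delta>. restrict (Poly_Mapping.lookup \<delta>) ?K) ` ?A"
    then obtain \<delta> g where x: "x = restrict (Poly_Mapping.lookup \<delta>) ?K" and g: "g + \<delta> = \<gamma>0" by auto
    have "\<And>v. Poly_Mapping.lookup \<delta> v \<le> Poly_Mapping.lookup \<gamma>0 v"
      using g by (metis le_add2 lookup_add)
    then show "x \<in> PiE ?K (\<lambda>v. {0..Poly_Mapping.lookup \<gamma>0 v})" using x by auto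
  qed
  have "finite (PiE ?K (\<lambda>v. {0..Poly_Mapping.lookup \<gamma>0 v}))"
    by (rule finite_PiE) auto
  then have "finite ((\<lambda>\<delta>. restrict (Poly_Mapping.lookup \<delta>) ?K) ` ?A)" using sub finite_subset by blast
  then show ?thesis using inj finite_imageD by blast
qed

definition divs :: "(mono \<Rightarrow> 'k::field) \<Rightarrow> mono set" where
  "divs F = {\<delta>. \<exists>\<gamma>' \<alpha>. F \<gamma>' \<noteq> 0 \<and> \<alpha> + \<delta> = \<gamma>'}"

lemma divs_fin:
  assumes "finite {\<gamma>. F \<gamma> \<noteq> 0}" shows "finite (divs F)"
proof -
  have "divs F = (\<Union>\<gamma>'\<in>{\<gamma>. F \<gamma> \<noteq> 0}. {\<delta>. \<exists>\<alpha>. \<alpha> + \<delta> = \<gamma>'})"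
    unfolding divs_def by auto
  then show ?thesis using assms div_fin by auto
qed

lemma divsI1: "F (\<gamma> + \<alpha>) \<noteq> 0 \<Longrightarrow> \<alpha> \<in> divs F"
  unfolding divs_def by blast

lemma divsI2: "F (\<gamma> + \<alpha>) \<noteq> 0 \<Longrightarrow> \<gamma> \<in> divs F"
  unfolding divs_def by (rule CollectI, rule exI[of _ "\<gamma> + \<alpha>"], rule exI[of _ \<alpha>]) (simp add: add.commute)

lemma shift_fin:
  assumes "finite {\<gamma>. F \<gamma> \<noteq> 0}" shows "finite {\<alpha>::mono. F (\<gamma> + \<alpha>) \<noteq> 0}"
proof -
  have "{\<alpha>::mono. F (\<gamma> + \<alpha>) \<noteq> 0} = (\<lambda>\<alpha>. \<gamma> + \<alpha>) -` {\<gamma>. F \<gamma> \<noteq> 0}" by auto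
  moreover have "inj ((+) \<gamma>)" by (simp add: inj_def)
  ultimately show ?thesis using assms finite_vimageI by metis
qed

lemma contract_eq_sum:
  assumes "finite S" "{\<alpha>. F (\<gamma> + \<alpha>) \<noteq> 0} \<subseteq> S"
  shows "contract \<phi> F \<gamma> = (\<Sum>\<alpha>\<in>S. \<phi> \<alpha> * F (\<gamma> + \<alpha>))"
  unfolding contract_def using assms
  by (intro sum.mono_neutral_left) auto

lemma contract_nz: "contract \<phi> F \<gamma> \<noteq> 0 \<Longrightarrow> \<exists>\<alpha>. F (\<gamma> + \<alpha>) \<noteq> 0"
  unfolding contract_def by (cases "{\<alpha>. F (\<gamma> + \<alpha>) \<noteq> 0} = {}") auto

lemma contract_fin:
  assumes "finite {\<gamma>. F \<gamma> \<noteq> 0}" shows "finite {\<gamma>. contract \<phi> F \<gamma> \<noteq> 0}"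
proof -
  have "{\<gamma>. contract \<phi> F \<gamma> \<noteq> 0} \<subseteq> divs F" using contract_nz divsI2 by blast
  then show ?thesis using divs_fin[OF assms] finite_subset by blast
qed

lemma contract_add:
  assumes "finite {\<gamma>. F \<gamma> \<noteq> 0}" "finite {\<gamma>. G \<gamma> \<noteq> 0}"
  shows "contract \<phi> (F + G) = contract \<phi> F + contract \<phi> G"
proof
  fix \<gamma>
  let ?S = "{\<alpha>. F (\<gamma> + \<alpha>) \<noteq> 0} \<union> {\<alpha>. G (\<gamma> + \<alpha>) \<noteq> 0}"
  have fS: "finite ?S" using shift_fin assms by blast
  have "contract \<phi> (F + G) \<gamma> = (\<Sum>\<alpha>\<in>?S. \<phi> \<alpha> * (F + G) (\<gamma> + \<alpha>))"
    by (rule contract_eq_sum[OF fS]) auto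
  also have "\<dots> = (\<Sum>\<alpha>\<in>?S. \<phi> \<alpha> * F (\<gamma> + \<alpha>)) + (\<Sum>\<alpha>\<in>?S. \<phi> \<alpha> * G (\<gamma> + \<alpha>))"
    by (simp add: sum.distrib distrib_left)
  also have "\<dots> = contract \<phi> F \<gamma> + contract \<phi> G \<gamma>"
    by (subst (1 2) contract_eq_sum[OF fS]) auto
  finally show "contract \<phi> (F + G) \<gamma> = (contract \<phi> F + contract \<phi> G) \<gamma>" by simp
qed

lemma contract_scale: "contract \<phi> (kscale c F) = kscale c (contract \<phi> F)"
proof (cases "c = 0")
  case True then show ?thesis by (simp add: contract_def kscale_def fun_eq_iff)
next
  case False
  show ?thesis
  proof
    fix \<gamma>
    have e: "{\<alpha>. c * F (\<gamma> + \<alpha>) \<noteq> 0} = {\<alpha>. F (\<gamma> + \<alpha>) \<noteq> 0}" using False by simp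
    show "contract \<phi> (kscale c F) \<gamma> = kscale c (contract \<phi> F) \<gamma>"
      unfolding contract_def kscale_def e sum_distrib_left by (simp add: mult.left_commute)
  qed
qed

lemma contract_zero_left: "contract (\<lambda>_. 0) F = 0"
  by (simp add: contract_def fun_eq_iff)

lemma contract_zero_right: "contract \<phi> 0 = 0"
  by (simp add: contract_def fun_eq_iff)

lemma contract_sum:
  assumes "finite U" "\<And>u. u \<in> U \<Longrightarrow> finite {\<gamma>. H u \<gamma> \<noteq> 0}"
  shows "contract \<phi> (\<lambda>\<gamma>. \<Sum>u\<in>U. H u \<gamma>) \<gamma> = (\<Sum>u\<in>U. contract \<phi> (H u) \<gamma>)"
proof -
  let ?S = "\<Union>u\<in>U. {\<alpha>. H u (\<gamma> + \<alpha>) \<noteq> 0}"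
  have fS: "finite ?S" using assms shift_fin by blast
  have sub: "{\<alpha>. (\<Sum>u\<in>U. H u (\<gamma> + \<alpha>)) \<noteq> 0} \<subseteq> ?S"
  proof
    fix \<alpha> assume "\<alpha> \<in> {\<alpha>. (\<Sum>u\<in>U. H u (\<gamma> + \<alpha>)) \<noteq> 0}"
    then have "(\<Sum>u\<in>U. H u (\<gamma> + \<alpha>)) \<noteq> 0" by simp
    then obtain u where "u \<in> U" "H u (\<gamma> + \<alpha>) \<noteq> 0" by (meson sum.neutral)
    then show "\<alpha> \<in> ?S" by blast
  qed
  have "contract \<phi> (\<lambda>\<gamma>. \<Sum>u\<in>U. H u \<gamma>) \<gamma> = (\<Sum>\<alpha>\<in>?S. \<phi> \<alpha> * (\<Sum>u\<in>U. H u (\<gamma> + \<alpha>)))"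
    by (rule contract_eq_sum[OF fS]) (use sub in simp)
  also have "\<dots> = (\<Sum>u\<in>U. \<Sum>\<alpha>\<in>?S. \<phi> \<alpha> * H u (\<gamma> + \<alpha>))"
    by (simp add: sum_distrib_left sum.swap[of _ U])
  also have "\<dots> = (\<Sum>u\<in>U. contract \<phi> (H u) \<gamma>)"
    by (rule sum.cong[OF refl], rule contract_eq_sum[OF fS, symmetric]) blast
  finally show ?thesis .
qed


lemma Rser_Z:
  assumes "\<phi> \<in> Rser r" "\<phi> \<alpha> \<noteq> 0" shows "Poly_Mapping.lookup \<alpha> (Z u) = 0"
proof -
  have "Poly_Mapping.keys \<alpha> \<subseteq> Xvars r" using assms by (auto simp: Rser_def)
  moreover have "Z u \<notin> Xvars r" by (auto simp: Xvars_def)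
  ultimately have "Z u \<notin> Poly_Mapping.keys \<alpha>" by blast
  then show ?thesis by (simp add: in_keys_iff)
qed

lemma nat_h1: "1 \<le> (a::nat) \<Longrightarrow> a + b - 1 = a - 1 + b" by arith
lemma nat_h2: "1 \<le> (a::nat) \<Longrightarrow> a - 1 + 1 = a" by arith

lemma shift_e:
  fixes \<gamma> \<alpha> :: mono
  assumes "1 \<le> Poly_Mapping.lookup \<gamma> (Z u)"
  shows "\<gamma> + \<alpha> - Poly_Mapping.single (Z u) 1 = (\<gamma> - Poly_Mapping.single (Z u) 1) + \<alpha>"
  apply (rule poly_mapping_eqI)
  subgoal for k
    by (cases "k = Z u") (use assms in \<open>simp_all add: lookup_add lookup_minus lookup_single when_def nat_h1 nat_h2\<close>)
  done

lemma shift_e2: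
  fixes \<gamma> :: mono
  assumes "1 \<le> Poly_Mapping.lookup \<gamma> (Z u)"
  shows "(\<gamma> - Poly_Mapping.single (Z u) 1) + Poly_Mapping.single (Z u) 1 = \<gamma>"
  apply (rule poly_mapping_eqI)
  subgoal for k
    by (cases "k = Z u") (use assms in \<open>simp_all add: lookup_add lookup_minus lookup_single when_def nat_h1 nat_h2\<close>)
  done

lemma mulZ_fin:
  assumes "finite {\<gamma>. g \<gamma> \<noteq> 0}" shows "finite {\<gamma>. mulZ g u \<gamma> \<noteq> 0}"
proof -
  have "{\<gamma>. mulZ g u \<gamma> \<noteq> 0} \<subseteq> (\<lambda>\<delta>. \<delta> + Poly_Mapping.single (Z u) 1) ` {\<gamma>. g \<gamma> \<noteq> 0}"
  proof
    fix \<gamma> assume "\<gamma> \<in> {\<gamma>. mulZ g u \<gamma> \<noteq> 0}"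
    then have a: "1 \<le> Poly_Mapping.lookup \<gamma> (Z u)" "g (\<gamma> - Poly_Mapping.single (Z u) 1) \<noteq> 0"
      by (auto simp: mulZ_def split: if_splits)
    show "\<gamma> \<in> (\<lambda>\<delta>. \<delta> + Poly_Mapping.single (Z u) 1) ` {\<gamma>. g \<gamma> \<noteq> 0}"
      using a shift_e2[OF a(1)] by (metis (mono_tags, lifting) image_eqI mem_Collect_eq)
  qed
  then show ?thesis using assms finite_subset by blast
qed

lemma contract_mulZ:
  assumes phi: "\<phi> \<in> Rser r" and fin: "finite {\<gamma>. g \<gamma> \<noteq> 0}"
  shows "contract \<phi> (mulZ g u) \<gamma> = mulZ (contract \<phi> g) u \<gamma>"
proof (cases "1 \<le> Poly_Mapping.lookup \<gamma> (Z u)")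
  case False
  have "contract \<phi> (mulZ g u) \<gamma> = 0"
    unfolding contract_def
  proof (rule sum.neutral, rule ballI)
    fix \<alpha>
    show "\<phi> \<alpha> * mulZ g u (\<gamma> + \<alpha>) = 0"
    proof (cases "\<phi> \<alpha> = 0")
      case False
      then have "Poly_Mapping.lookup \<alpha> (Z u) = 0" using Rser_Z[OF phi] by blast
      then have "Poly_Mapping.lookup (\<gamma> + \<alpha>) (Z u) = Poly_Mapping.lookup \<gamma> (Z u)" by (simp add: lookup_add)
      then show ?thesis using \<open>\<not> 1 \<le> Poly_Mapping.lookup \<gamma> (Z u)\<close> by (simp add: mulZ_def)
    qed simp
  qed
  then show ?thesis using False by (simp add: mulZ_def)
next
  case True
  let ?e = "Poly_Mapping.single (Z u) 1"
  let ?n = "Poly_Mapping.lookup \<gamma> (Z u)"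
  let ?S = "{\<alpha>. g ((\<gamma> - ?e) + \<alpha>) \<noteq> 0}"
  have fS: "finite ?S" using shift_fin[OF fin] .
  have sub: "{\<alpha>. mulZ g u (\<gamma> + \<alpha>) \<noteq> 0} \<subseteq> ?S"
    using shift_e[OF True] by (auto simp: mulZ_def split: if_splits)
  have "contract \<phi> (mulZ g u) \<gamma> = (\<Sum>\<alpha>\<in>?S. \<phi> \<alpha> * mulZ g u (\<gamma> + \<alpha>))"
    by (rule contract_eq_sum[OF fS sub])
  also have "\<dots> = (\<Sum>\<alpha>\<in>?S. of_nat ?n * (\<phi> \<alpha> * g ((\<gamma> - ?e) + \<alpha>)))"
  proof (rule sum.cong[OF refl])
    fix \<alpha>
    show "\<phi> \<alpha> * mulZ g u (\<gamma> + \<alpha>) = of_nat ?n * (\<phi> \<alpha> * g ((\<gamma> - ?e) + \<alpha>))"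
    proof (cases "\<phi> \<alpha> = 0")
      case False
      then have "Poly_Mapping.lookup \<alpha> (Z u) = 0" using Rser_Z[OF phi] by blast
      then have "Poly_Mapping.lookup (\<gamma> + \<alpha>) (Z u) = ?n" by (simp add: lookup_add)
      then show ?thesis using True shift_e[OF True] by (simp add: mulZ_def)
    qed simp
  qed
  also have "\<dots> = of_nat ?n * contract \<phi> g (\<gamma> - ?e)"
    by (subst contract_eq_sum[OF fS]) (auto simp: sum_distrib_left)
  also have "\<dots> = mulZ (contract \<phi> g) u \<gamma>" using True by (simp add: mulZ_def)
  finally show ?thesis .
qed

lemma contract_W_X:
  assumes phi: "\<phi> \<in> Rser r" and kg: "Poly_Mapping.keys \<gamma> \<subseteq> Xvars r"
  shows "contract \<phi> (\<lambda>\<gamma>. \<Sum>u\<in>U. mulZ (H u) u \<gamma>) \<gamma> = 0"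
  unfolding contract_def
proof (rule sum.neutral, rule ballI)
  fix \<alpha>
  show "\<phi> \<alpha> * (\<Sum>u\<in>U. mulZ (H u) u (\<gamma> + \<alpha>)) = 0"
  proof (cases "\<phi> \<alpha> = 0")
    case False
    have "mulZ (H u) u (\<gamma> + \<alpha>) = 0" for u
    proof -
      have "Poly_Mapping.lookup \<alpha> (Z u) = 0" using Rser_Z[OF phi False] .
      moreover have "Z u \<notin> Xvars r" by (auto simp: Xvars_def)
      then have "Poly_Mapping.lookup \<gamma> (Z u) = 0" using kg by (auto simp: in_keys_iff)
      ultimately show ?thesis by (simp add: mulZ_def lookup_add)
    qed
    then show ?thesis by simp
  qed simp
qed


lemma double_sum:
  assumes fin: "finite {\<gamma>. g \<gamma> \<noteq> 0}"
  shows "contract \<phi> (contract \<psi> g) \<gamma> =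
    (\<Sum>\<alpha>\<in>divs g. \<Sum>\<beta>\<in>divs g. \<phi> \<alpha> * (\<psi> \<beta> * g (\<gamma> + \<alpha> + \<beta>)))"
proof -
  have fD: "finite (divs g)" using divs_fin[OF fin] .
  have sub1: "{\<alpha>. contract \<psi> g (\<gamma> + \<alpha>) \<noteq> 0} \<subseteq> divs g"
  proof
    fix \<alpha> assume "\<alpha> \<in> {\<alpha>. contract \<psi> g (\<gamma> + \<alpha>) \<noteq> 0}"
    then obtain \<beta> where "g (\<gamma> + \<alpha> + \<beta>) \<noteq> 0" using contract_nz by blast
    then have "g ((\<gamma> + \<beta>) + \<alpha>) \<noteq> 0" by (simp add: ac_simps)
    then show "\<alpha> \<in> divs g" by (rule divsI1)
  qed
  have inner: "contract \<psi> g (\<gamma> + \<alpha>) = (\<Sum>\<beta>\<in>divs g. \<psi> \<beta> * g (\<gamma> + \<alpha> + \<beta>))" for \<alpha>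
    by (rule contract_eq_sum[OF fD]) (use divsI1 in blast)
  show ?thesis
    by (subst contract_eq_sum[OF fD sub1]) (simp add: inner sum_distrib_left)
qed

lemma contract_comm:
  assumes fin: "finite {\<gamma>. g \<gamma> \<noteq> 0}"
  shows "contract \<phi> (contract \<psi> g) = contract \<psi> (contract \<phi> g)"
proof
  fix \<gamma>
  have "contract \<psi> (contract \<phi> g) \<gamma> =
    (\<Sum>\<beta>\<in>divs g. \<Sum>\<alpha>\<in>divs g. \<psi> \<beta> * (\<phi> \<alpha> * g (\<gamma> + \<beta> + \<alpha>)))"
    by (rule double_sum[OF fin])
  also have "\<dots> = (\<Sum>\<alpha>\<in>divs g. \<Sum>\<beta>\<in>divs g. \<psi> \<beta> * (\<phi> \<alpha> * g (\<gamma> + \<beta> + \<alpha>)))"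
    by (rule sum.swap)
  also have "\<dots> = (\<Sum>\<alpha>\<in>divs g. \<Sum>\<beta>\<in>divs g. \<phi> \<alpha> * (\<psi> \<beta> * g (\<gamma> + \<alpha> + \<beta>)))"
    by (simp add: ac_simps)
  also have "\<dots> = contract \<phi> (contract \<psi> g) \<gamma>"
    by (rule double_sum[OF fin, symmetric])
  finally show "contract \<phi> (contract \<psi> g) \<gamma> = contract \<psi> (contract \<phi> g) \<gamma>" by simp
qed

definition cprod :: "(mono \<Rightarrow> 'k) \<Rightarrow> (mono \<Rightarrow> 'k) \<Rightarrow> (mono \<Rightarrow> 'k::field) \<Rightarrow> (mono \<Rightarrow> 'k)" where
  "cprod \<phi> \<psi> g \<delta> = (\<Sum>p\<in>divs g \<times> divs g. if fst p + snd p = \<delta> then \<phi> (fst p) * \<psi> (snd p) else 0)"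

lemma contract_cprod:
  assumes fin: "finite {\<gamma>. g \<gamma> \<noteq> 0}"
  shows "contract (cprod \<phi> \<psi> g) g = contract \<phi> (contract \<psi> g)"
proof
  fix \<gamma>
  let ?D = "divs g"
  have fD: "finite ?D" using divs_fin[OF fin] .
  have "contract (cprod \<phi> \<psi> g) g \<gamma> = (\<Sum>\<delta>\<in>?D. cprod \<phi> \<psi> g \<delta> * g (\<gamma> + \<delta>))"
    by (rule contract_eq_sum[OF fD]) (use divsI1 in blast)
  also have "\<dots> = (\<Sum>\<delta>\<in>?D. \<Sum>p\<in>?D \<times> ?D. (if fst p + snd p = \<delta> then \<phi> (fst p) * \<psi> (snd p) * g (\<gamma> + \<delta>) else 0))"
    unfolding cprod_def sum_distrib_right by (intro sum.cong refl) simp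
  also have "\<dots> = (\<Sum>p\<in>?D \<times> ?D. \<Sum>\<delta>\<in>?D. (if fst p + snd p = \<delta> then \<phi> (fst p) * \<psi> (snd p) * g (\<gamma> + \<delta>) else 0))"
    by (rule sum.swap)
  also have "\<dots> = (\<Sum>p\<in>?D \<times> ?D. (if fst p + snd p \<in> ?D then \<phi> (fst p) * \<psi> (snd p) * g (\<gamma> + (fst p + snd p)) else 0))"
    by (rule sum.cong[OF refl]) (simp add: sum.delta'[OF fD])
  also have "\<dots> = (\<Sum>p\<in>?D \<times> ?D. \<phi> (fst p) * \<psi> (snd p) * g (\<gamma> + (fst p + snd p)))"
  proof (rule sum.cong[OF refl])
    fix p
    show "(if fst p + snd p \<in> ?D then \<phi> (fst p) * \<psi> (snd p) * g (\<gamma> + (fst p + snd p)) else 0) =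
      \<phi> (fst p) * \<psi> (snd p) * g (\<gamma> + (fst p + snd p))"
      using divsI1[of g \<gamma> "fst p + snd p"] by auto
  qed
  also have "\<dots> = (\<Sum>\<alpha>\<in>?D. \<Sum>\<beta>\<in>?D. \<phi> \<alpha> * (\<psi> \<beta> * g (\<gamma> + \<alpha> + \<beta>)))"
    by (subst sum.cartesian_product) (intro sum.cong refl, auto simp: ac_simps)
  also have "\<dots> = contract \<phi> (contract \<psi> g) \<gamma>"
    by (rule double_sum[OF fin, symmetric])
  finally show "contract (cprod \<phi> \<psi> g) g \<gamma> = contract \<phi> (contract \<psi> g) \<gamma>" .
qed

lemma cprod_Rser:
  assumes "\<phi> \<in> Rser r" "\<psi> \<in> Rser r" shows "cprod \<phi> \<psi> g \<in> Rser r"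
  unfolding Rser_def
proof (intro CollectI allI impI)
  fix \<delta> assume "cprod \<phi> \<psi> g \<delta> \<noteq> 0"
  then have "\<exists>p. (if fst p + snd p = \<delta> then \<phi> (fst p) * \<psi> (snd p) else 0) \<noteq> 0"
  proof (rule contrapos_np)
    assume "\<not> (\<exists>p. (if fst p + snd p = \<delta> then \<phi> (fst p) * \<psi> (snd p) else 0) \<noteq> 0)"
    then show "cprod \<phi> \<psi> g \<delta> = 0" unfolding cprod_def by (intro sum.neutral) blast
  qed
  then obtain p where "(if fst p + snd p = \<delta> then \<phi> (fst p) * \<psi> (snd p) else 0) \<noteq> 0" by blast
  then have p: "fst p + snd p = \<delta>" "\<phi> (fst p) \<noteq> 0" "\<psi> (snd p) \<noteq> 0" by (auto split: if_splits)
  have "Poly_Mapping.keys (fst p) \<subseteq> Xvars r" "Poly_Mapping.keys (snd p) \<subseteq> Xvars r"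
    using assms p by (auto simp: Rser_def)
  then show "Poly_Mapping.keys \<delta> \<subseteq> Xvars r" using keys_add[of "fst p" "snd p"] p(1) by blast
qed

lemma fin_ks:
  assumes "finite {\<gamma>. x \<gamma> \<noteq> 0}" "finite {\<gamma>. y \<gamma> \<noteq> 0}"
  shows "finite {\<gamma>. (kscale c x + y) \<gamma> \<noteq> 0}"
proof -
  have "{\<gamma>. (kscale c x + y) \<gamma> \<noteq> 0} \<subseteq> {\<gamma>. x \<gamma> \<noteq> 0} \<union> {\<gamma>. y \<gamma> \<noteq> 0}"
    by (auto simp: kscale_def)
  then show ?thesis using assms finite_subset by blast
qed

lemma fin_ks1:
  assumes "finite {\<gamma>. x \<gamma> \<noteq> 0}"
  shows "finite {\<gamma>. (kscale c x) \<gamma> \<noteq> 0}"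
proof -
  have "{\<gamma>. (kscale c x) \<gamma> \<noteq> 0} \<subseteq> {\<gamma>. x \<gamma> \<noteq> 0}"
    by (auto simp: kscale_def)
  then show ?thesis using assms finite_subset by blast
qed

lemma RC_induct[consumes 1, case_names zero step]:
  assumes x: "x \<in> RC r G"
    and h0: "P 0"
    and stp: "\<And>c \<psi> g y. \<psi> \<in> Rser r \<Longrightarrow> g \<in> G \<Longrightarrow> P y \<Longrightarrow> P (kscale c (contract \<psi> g) + y)"
  shows "P x"
  using x unfolding RC_def kspan_eq
proof (induction rule: ks.span_induct_alt)
  case base then show ?case by (rule h0)
next
  case (step c x y) then show ?case using stp by blast
qed

lemma RC_gen: "\<psi> \<in> Rser r \<Longrightarrow> g \<in> G \<Longrightarrow> contract \<psi> g \<in> RC r G"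
  unfolding RC_def kspan_eq by (rule ks.span_base) blast

lemma RC_add: "x \<in> RC r G \<Longrightarrow> y \<in> RC r G \<Longrightarrow> x + y \<in> RC r G"
  unfolding RC_def kspan_eq by (rule ks.span_add)

lemma RC_scale: "x \<in> RC r G \<Longrightarrow> kscale c x \<in> RC r G"
  unfolding RC_def kspan_eq by (rule ks.span_scale)

lemma RC_zero: "0 \<in> RC r G"
  unfolding RC_def kspan_eq by (rule ks.span_zero)

lemma RC_fin:
  assumes G: "\<forall>g\<in>G. finite {\<gamma>. g \<gamma> \<noteq> 0}" and x: "x \<in> RC r G"
  shows "finite {\<gamma>. x \<gamma> \<noteq> 0}"
  using x
proof (induction rule: RC_induct)
  case zero then show ?case by simp
next
  case (step c \<psi> g y) then show ?case using G contract_fin fin_ks by blast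
qed

lemma RC_contract:
  assumes G: "\<forall>g\<in>G. finite {\<gamma>. g \<gamma> \<noteq> 0}" and phi: "\<phi> \<in> Rser r" and x: "x \<in> RC r G"
  shows "contract \<phi> x \<in> RC r G"
proof -
  have "finite {\<gamma>. x \<gamma> \<noteq> 0} \<and> contract \<phi> x \<in> RC r G"
    using x
  proof (induction rule: RC_induct)
    case zero show ?case
    proof (intro conjI)
      show "finite {\<gamma>. (0 :: mono \<Rightarrow> _) \<gamma> \<noteq> 0}" by simp
      show "contract \<phi> 0 \<in> RC r G" unfolding contract_zero_right by (rule RC_zero)
    qed
  next
    case (step c \<psi> g y)
    have fg: "finite {\<gamma>. g \<gamma> \<noteq> 0}" using G step by blast
    have fx: "finite {\<gamma>. contract \<psi> g \<gamma> \<noteq> 0}" using contract_fin[OF fg] .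
    have "contract \<phi> (kscale c (contract \<psi> g) + y) = kscale c (contract \<phi> (contract \<psi> g)) + contract \<phi> y"
      using contract_add[OF fin_ks1[OF fx] conjunct1[OF step(3)]] contract_scale by metis
    also have "contract \<phi> (contract \<psi> g) = contract (cprod \<phi> \<psi> g) g"
      using contract_cprod[OF fg] by metis
    finally have e: "contract \<phi> (kscale c (contract \<psi> g) + y) = kscale c (contract (cprod \<phi> \<psi> g) g) + contract \<phi> y" .
    have "contract (cprod \<phi> \<psi> g) g \<in> RC r G"
      using RC_gen cprod_Rser phi step(1,2) by blast
    then have "contract \<phi> (kscale c (contract \<psi> g) + y) \<in> RC r G"
      unfolding e using step(3) RC_add RC_scale by blast
    then show ?case using fin_ks[OF fx conjunct1[OF step(3)]] by blast
  qed
  then show ?thesis by blast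
qed

lemma RC_ann:
  assumes G: "\<forall>g\<in>G. finite {\<gamma>. g \<gamma> \<noteq> 0}" and phi: "\<forall>g\<in>G. contract \<phi> g = 0" and x: "x \<in> RC r G"
  shows "contract \<phi> x = 0"
proof -
  have "finite {\<gamma>. x \<gamma> \<noteq> 0} \<and> contract \<phi> x = 0"
    using x
  proof (induction rule: RC_induct)
    case zero show ?case
    proof (intro conjI)
      show "finite {\<gamma>. (0 :: mono \<Rightarrow> _) \<gamma> \<noteq> 0}" by simp
      show "contract \<phi> 0 = 0" by (rule contract_zero_right)
    qed
  next
    case (step c \<psi> g y)
    have fg: "finite {\<gamma>. g \<gamma> \<noteq> 0}" using G step by blast
    have fx: "finite {\<gamma>. contract \<psi> g \<gamma> \<noteq> 0}" using contract_fin[OF fg] .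
    have "contract \<phi> (kscale c (contract \<psi> g) + y) = kscale c (contract \<phi> (contract \<psi> g)) + contract \<phi> y"
      using contract_add[OF fin_ks1[OF fx] conjunct1[OF step(3)]] contract_scale by metis
    also have "contract \<phi> (contract \<psi> g) = contract \<psi> (contract \<phi> g)"
      using contract_comm[OF fg] by metis
    also have "\<dots> = 0" using phi step(2) contract_zero_right by metis
    finally have E: "contract \<phi> (kscale c (contract \<psi> g) + y) = kscale c 0 + contract \<phi> y" .
    have "kscale c 0 + contract \<phi> y = 0"
      using conjunct2[OF step(3)] by (simp add: kscale_def fun_eq_iff)
    then have "contract \<phi> (kscale c (contract \<psi> g) + y) = 0" using E by simp
    then show ?case using fin_ks[OF fx conjunct1[OF step(3)]] by blast
  qed
  then show ?thesis by blast
qed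

lemma RC_X:
  assumes G: "\<forall>g\<in>G. \<forall>\<gamma>. g \<gamma> \<noteq> 0 \<longrightarrow> Poly_Mapping.keys \<gamma> \<subseteq> Xvars r" and x: "x \<in> RC r G"
  shows "\<forall>\<gamma>. x \<gamma> \<noteq> 0 \<longrightarrow> Poly_Mapping.keys \<gamma> \<subseteq> Xvars r"
  using x
proof (induction rule: RC_induct)
  case zero then show ?case by simp
next
  case (step c \<psi> g y)
  have cX: "Poly_Mapping.keys \<gamma> \<subseteq> Xvars r" if nz: "contract \<psi> g \<gamma> \<noteq> 0" for \<gamma>
  proof -
    obtain \<alpha> where a: "g (\<gamma> + \<alpha>) \<noteq> 0" using contract_nz[OF nz] by blast
    have "Poly_Mapping.keys (\<gamma> + \<alpha>) \<subseteq> Xvars r" using G step(2) a by blast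
    moreover have "Poly_Mapping.keys \<gamma> \<subseteq> Poly_Mapping.keys (\<gamma> + \<alpha>)"
      by (auto simp: in_keys_iff lookup_add)
    ultimately show ?thesis by blast
  qed
  show ?case
  proof (intro allI impI)
    fix \<gamma> assume "(kscale c (contract \<psi> g) + y) \<gamma> \<noteq> 0"
    then have "contract \<psi> g \<gamma> \<noteq> 0 \<or> y \<gamma> \<noteq> 0" by (auto simp: kscale_def)
    then show "Poly_Mapping.keys \<gamma> \<subseteq> Xvars r" using cX step(3) by blast
  qed
qed

lemma RC_self:
  assumes fin: "finite {\<gamma>. g \<gamma> \<noteq> 0}" and g: "g \<in> G"
  shows "g \<in> RC r G"
proof -
  let ?d = "\<lambda>\<alpha>::mono. if \<alpha> = 0 then (1::'a) else 0"
  have d: "?d \<in> Rser r" by (auto simp: Rser_def)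
  have "contract ?d g = g"
  proof
    fix \<gamma>
    let ?S = "{\<alpha>. g (\<gamma> + \<alpha>) \<noteq> 0}"
    have fS: "finite ?S" using shift_fin[OF fin] .
    have "contract ?d g \<gamma> = (\<Sum>\<alpha>\<in>?S. if \<alpha> = 0 then g \<gamma> else 0)"
      unfolding contract_def by (rule sum.cong) auto
    also have "\<dots> = (if 0 \<in> ?S then g \<gamma> else 0)" by (rule sum.delta[OF fS])
    also have "\<dots> = g \<gamma>" by auto
    finally show "contract ?d g \<gamma> = g \<gamma>" .
  qed
  then show ?thesis using RC_gen[OF d g] by simp
qed


lemma DPD_props:
  assumes "g \<in> DPD r"
  shows "finite {\<gamma>. g \<gamma> \<noteq> 0}" "\<forall>\<gamma>. g \<gamma> \<noteq> 0 \<longrightarrow> Poly_Mapping.keys \<gamma> \<subseteq> Xvars r"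
  using assms by (auto simp: DPD_def DPE_def Zvars_def)

theorem corollary1p44:
  fixes r s j :: nat and f :: "mono \<Rightarrow> 'k::field"
    and h :: "nat \<Rightarrow> mono \<Rightarrow> 'k" and k :: "nat \<Rightarrow> nat" and t :: nat
  assumes f: "f \<in> DPDj r j"
    and kchain1: "s \<ge> 1 \<Longrightarrow> k 1 + 2 \<le> j"
    and kchain: "\<And>u. 1 \<le> u \<Longrightarrow> u < s \<Longrightarrow> k (u + 1) \<le> k u"
    and kpos: "\<And>u. 1 \<le> u \<Longrightarrow> u \<le> s \<Longrightarrow> 1 \<le> k u"
    and h: "\<And>u. 1 \<le> u \<Longrightarrow> u \<le> s \<Longrightarrow> h u \<in> DPDj r (k u)"
    and t: "1 \<le> t" "t \<le> s"
  shows "quot_zero (Bnum r s f h t) (Bden r s f h t) \<longleftrightarrow>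
         h t \<in> RC r (insert f (h ` {1..t-1}))"
proof -
  let ?G' = "insert f (h ` {1..t-1})"
  let ?Gt = "insert f (h ` {1..t})"
  let ?Wt = "\<lambda>\<gamma>. \<Sum>u\<in>{t..s}. mulZ (h u) u \<gamma>"
  let ?Wt1 = "\<lambda>\<gamma>. \<Sum>u\<in>{t+1..s}. mulZ (h u) u \<gamma>"
  have tt: "{1..t} = insert t {1..t-1}" using t(1) by auto
  have Gt_eq: "?Gt = insert (h t) ?G'" unfolding tt by auto
  have hD: "h u \<in> DPD r" if "1 \<le> u" "u \<le> s" for u using h[OF that] by (simp add: DPDj_def)
  have fD: "f \<in> DPD r" using f by (simp add: DPDj_def)
  have GtD: "\<forall>g\<in>?Gt. g \<in> DPD r" using fD hD t(2) by auto
  have finGt: "\<forall>g\<in>?Gt. finite {\<gamma>. g \<gamma> \<noteq> 0}" using GtD DPD_props(1) by blast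
  have XGt: "\<forall>g\<in>?Gt. \<forall>\<gamma>. g \<gamma> \<noteq> 0 \<longrightarrow> Poly_Mapping.keys \<gamma> \<subseteq> Xvars r" using GtD DPD_props(2) by blast
  have G'sub: "?G' \<subseteq> ?Gt" using Gt_eq by blast
  have finG': "\<forall>g\<in>?G'. finite {\<gamma>. g \<gamma> \<noteq> 0}" using finGt G'sub by blast
  have XG': "\<forall>g\<in>?G'. \<forall>\<gamma>. g \<gamma> \<noteq> 0 \<longrightarrow> Poly_Mapping.keys \<gamma> \<subseteq> Xvars r" using XGt G'sub by blast
  have htD: "h t \<in> DPD r" using hD t by blast
  have finh: "finite {\<gamma>. h u \<gamma> \<noteq> 0}" if "u \<in> {t..s}" for u
    using hD[of u] that t(1) DPD_props(1) by auto
  have Bnum_eq: "Bnum r s f h t = ssum (RC r ?Gt) (act_set (AnnR r ?G') ?Wt)"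
    by (simp add: Bnum_def)
  have Bden_eq: "Bden r s f h t = ssum (RC r ?G') (act_set (AnnR r ?Gt) ?Wt1)"
    by (simp add: Bden_def)
  show ?thesis
  proof
    assume "quot_zero (Bnum r s f h t) (Bden r s f h t)"
    then have sub: "Bnum r s f h t \<subseteq> Bden r s f h t" by (simp add: quot_zero_def)
    have z: "(\<lambda>_. 0) \<in> AnnR r ?G'" by (auto simp: AnnR_def Rser_def contract_zero_left)
    have "h t \<in> ?Gt" using t(1) by auto
    then have "h t \<in> RC r ?Gt" by (rule RC_self[OF DPD_props(1)[OF htD]])
    then have htRC: "h t \<in> RC r ?Gt" .
    have cz: "contract (\<lambda>_. 0) ?Wt \<in> act_set (AnnR r ?G') ?Wt"
      unfolding act_set_def using z by blast
    have "h t + contract (\<lambda>_. 0) ?Wt \<in> Bnum r s f h t"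
      unfolding Bnum_eq ssum_def using htRC cz by blast
    then have "h t \<in> Bnum r s f h t" unfolding contract_zero_left by simp
    then have "h t \<in> Bden r s f h t" by (rule subsetD[OF sub])
    then obtain a b where ht0: "h t = a + b" and a: "a \<in> RC r ?G'"
      and b: "b \<in> act_set (AnnR r ?Gt) ?Wt1"
      unfolding Bden_eq ssum_def by blast
    from b obtain \<phi> where bb: "b = contract \<phi> ?Wt1" and phi: "\<phi> \<in> AnnR r ?Gt"
      unfolding act_set_def by blast
    have ht: "h t = a + contract \<phi> ?Wt1" using ht0 bb by simp
    have phiR: "\<phi> \<in> Rser r" using phi by (simp add: AnnR_def)
    have "h t = a"
    proof
      fix \<gamma>
      have e: "h t \<gamma> = a \<gamma> + contract \<phi> ?Wt1 \<gamma>" using fun_cong[OF ht, of \<gamma>] by (simp only: plus_fun_apply)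
      show "h t \<gamma> = a \<gamma>"
      proof (cases "Poly_Mapping.keys \<gamma> \<subseteq> Xvars r")
        case True
        then show ?thesis using e contract_W_X[OF phiR True] by simp
      next
        case False
        have "h t \<gamma> = 0" using False DPD_props(2)[OF htD] by blast
        moreover have "a \<gamma> = 0" using False RC_X[OF XG' a] by blast
        ultimately show ?thesis by simp
      qed
    qed
    then show "h t \<in> RC r ?G'" using a by simp
  next
    assume hin: "h t \<in> RC r ?G'"
    have gens: "{contract \<psi> g | \<psi> g. \<psi> \<in> Rser r \<and> g \<in> ?Gt} \<subseteq> RC r ?G'"
    proof
      fix x assume "x \<in> {contract \<psi> g | \<psi> g. \<psi> \<in> Rser r \<and> g \<in> ?Gt}"
      then obtain \<psi> g where x: "x = contract \<psi> g" and psi: "\<psi> \<in> Rser r" and g: "g \<in> ?Gt"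
        by (auto simp only: mem_Collect_eq)
      have g2: "g \<in> insert (h t) ?G'" using g unfolding Gt_eq .
      show "x \<in> RC r ?G'"
      proof (cases "g = h t")
        case True
        show ?thesis using RC_contract[OF finG' psi hin] unfolding x True .
      next
        case False
        then have "g \<in> ?G'" using g2 by (simp only: insert_iff simp_thms)
        then show ?thesis unfolding x by (rule RC_gen[OF psi])
      qed
    qed
    have RCsub: "RC r ?Gt \<subseteq> RC r ?G'"
      unfolding RC_def kspan_eq by (rule ks.span_minimal[OF gens[unfolded RC_def kspan_eq] ks.subspace_span])
    show "quot_zero (Bnum r s f h t) (Bden r s f h t)"
      unfolding quot_zero_def
    proof
      fix x assume "x \<in> Bnum r s f h t"
      then obtain a b where x0: "x = a + b" and a: "a \<in> RC r ?Gt"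
        and b: "b \<in> act_set (AnnR r ?G') ?Wt"
        unfolding Bnum_eq ssum_def by blast
      from b obtain \<phi> where bb: "b = contract \<phi> ?Wt" and phi: "\<phi> \<in> AnnR r ?G'"
        unfolding act_set_def by blast
      have x: "x = a + contract \<phi> ?Wt" using x0 bb by simp
      have phiR: "\<phi> \<in> Rser r" using phi by (simp add: AnnR_def)
      have ann': "\<forall>g\<in>?G'. contract \<phi> g = 0" using phi by (simp add: AnnR_def)
      have pht: "contract \<phi> (h t) = 0" using RC_ann[OF finG' ann' hin] .
      have phi2: "\<phi> \<in> AnnR r ?Gt" unfolding Gt_eq AnnR_def using phiR ann' pht by blast
      have WW: "contract \<phi> ?Wt = contract \<phi> ?Wt1"
      proof
        fix \<gamma>
        have ts: "{t..s} = insert t {t+1..s}" using t(2) by auto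
        have fin0: "\<And>u. u \<in> {t..s} \<Longrightarrow> finite {\<gamma>. mulZ (h u) u \<gamma> \<noteq> 0}"
          by (rule mulZ_fin[OF finh])
        have fin1: "\<And>u. u \<in> {t+1..s} \<Longrightarrow> finite {\<gamma>. mulZ (h u) u \<gamma> \<noteq> 0}"
          using fin0 by simp
        have "contract \<phi> ?Wt \<gamma> = (\<Sum>u\<in>{t..s}. contract \<phi> (mulZ (h u) u) \<gamma>)"
          by (rule contract_sum) (simp, rule fin0)
        also have "\<dots> = contract \<phi> (mulZ (h t) t) \<gamma> + (\<Sum>u\<in>{t+1..s}. contract \<phi> (mulZ (h u) u) \<gamma>)"
          unfolding ts by (rule sum.insert) simp_all
        also have "contract \<phi> (mulZ (h t) t) \<gamma> = 0"
          using contract_mulZ[OF phiR finh[of t]] t pht by (simp add: mulZ_def)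
        also have "(\<Sum>u\<in>{t+1..s}. contract \<phi> (mulZ (h u) u) \<gamma>) = contract \<phi> ?Wt1 \<gamma>"
          by (rule contract_sum[symmetric]) (simp, rule fin1)
        finally show "contract \<phi> ?Wt \<gamma> = contract \<phi> ?Wt1 \<gamma>" by simp
      qed
      have aa: "a \<in> RC r ?G'" using a RCsub by (rule subsetD[rotated])
      have cc: "contract \<phi> ?Wt1 \<in> act_set (AnnR r ?Gt) ?Wt1"
        unfolding act_set_def using phi2 by blast
      have "a + contract \<phi> ?Wt1 \<in> ssum (RC r ?G') (act_set (AnnR r ?Gt) ?Wt1)"
        unfolding ssum_def using aa cc by blast
      then show "x \<in> Bden r s f h t"
        unfolding Bden_eq x WW .
    qed
  qed
qed

end
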